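(* Let $p \in \beta\mathbb{N}$. If $p$ is prime with respect to $\tilde{\mid}$-divisibility, then $p$ is prime with respect to each of $\mid_l$, $\mid_r$ and $\mid_m$ divisibility.
   Context: $\mathbb{N}=\{1,2,3,\dots\}$ with the discrete topology; $\beta\mathbb{N}$ is its Stone–Čech compactification, identified with the set of ultrafilters on $\mathbb{N}$, where each $n\in\mathbb{N}$ is identified with the principal ultrafilter at $n$. Multiplication on $\beta\mathbb{N}$: for $x,y\in\beta\mathbb{N}$ and $A\subseteq\mathbb{N}$, $A\in x\cdot y$ iff $\{n\in\mathbb{N}: A/n\in y\}\in x$, where $A/n=\{m\in\mathbb{N}: mn\in A\}$. Divisibilities on $\beta\mathbb{N}$: $x\mid_l y$ iff $y=zx$ for some $z\in\beta\mathbb{N}$; $x\mid_r y$ iff $y=xz$ for some $z\in\beta\mathbb{N}$; $x\mid_m y$ iff $y=zxw$ for some $z,w\in\beta\mathbb{N}$; $x\,\tilde{\mid}\,y$ iff for every $A\in x$, the set $\{n\in\mathbb{N}:\exists a\in A,\ a\mid n\}$ belongs to $y$. An element $p\in\beta\mathbb{N}\setminus\{1\}$ is prime with respect to a given divisibility relation if the only elements dividing $p$ in that relation are $1$ and $p$. *)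

theory Defs
  imports Main
begin

definition Npos :: "nat set" where
  "Npos = {n. 1 \<le> n}"

text \<open>Points of the Stone-Cech compactification beta N: ultrafilters on Npos,
  represented as families of subsets of Npos.\<close>
definition ultrafilter_N :: "nat set set \<Rightarrow> bool" where
  "ultrafilter_N U \<longleftrightarrow>
     (\<forall>A\<in>U. A \<subseteq> Npos) \<and> Npos \<in> U \<and> {} \<notin> U \<and>
     (\<forall>A\<in>U. \<forall>B\<in>U. A \<inter> B \<in> U) \<and>
     (\<forall>A\<in>U. \<forall>B. A \<subseteq> B \<and> B \<subseteq> Npos \<longrightarrow> B \<in> U) \<and>
     (\<forall>A. A \<subseteq> Npos \<longrightarrow> A \<in> U \<or> Npos - A \<in> U)"

text \<open>The principal ultrafilter at n (identified with n).\<close>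
definition principal_N :: "nat \<Rightarrow> nat set set" where
  "principal_N n = {A. A \<subseteq> Npos \<and> n \<in> A}"

definition sdiv :: "nat set \<Rightarrow> nat \<Rightarrow> nat set" where
  "sdiv A n = {m \<in> Npos. m * n \<in> A}"

definition bmult :: "nat set set \<Rightarrow> nat set set \<Rightarrow> nat set set" where
  "bmult x y = {A. A \<subseteq> Npos \<and> {n \<in> Npos. sdiv A n \<in> y} \<in> x}"

definition ldvd :: "nat set set \<Rightarrow> nat set set \<Rightarrow> bool" where
  "ldvd x y \<longleftrightarrow> (\<exists>z. ultrafilter_N z \<and> y = bmult z x)"

definition rdvd :: "nat set set \<Rightarrow> nat set set \<Rightarrow> bool" where
  "rdvd x y \<longleftrightarrow> (\<exists>z. ultrafilter_N z \<and> y = bmult x z)"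

definition mdvd :: "nat set set \<Rightarrow> nat set set \<Rightarrow> bool" where
  "mdvd x y \<longleftrightarrow> (\<exists>z w. ultrafilter_N z \<and> ultrafilter_N w \<and> y = bmult (bmult z x) w)"

definition tdvd :: "nat set set \<Rightarrow> nat set set \<Rightarrow> bool" where
  "tdvd x y \<longleftrightarrow> (\<forall>A\<in>x. {n \<in> Npos. \<exists>a\<in>A. a dvd n} \<in> y)"

definition prime_wrt :: "(nat set set \<Rightarrow> nat set set \<Rightarrow> bool) \<Rightarrow> nat set set \<Rightarrow> bool" where
  "prime_wrt R p \<longleftrightarrow> p \<noteq> principal_N 1 \<and>
     (\<forall>x. ultrafilter_N x \<and> R x p \<longrightarrow> x = principal_N 1 \<or> x = p)"

end

theory Submission
  imports Defs
begin

lemma uf_up: "ultrafilter_N x \<Longrightarrow> A \<in> x \<Longrightarrow> A \<subseteq> B \<Longrightarrow> B \<subseteq> Npos \<Longrightarrow> B \<in> x"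
  unfolding ultrafilter_N_def by (elim conjE) blast

lemma uf_sub: "ultrafilter_N x \<Longrightarrow> A \<in> x \<Longrightarrow> A \<subseteq> Npos"
  unfolding ultrafilter_N_def by (elim conjE) blast

lemma uf_N: "ultrafilter_N x \<Longrightarrow> Npos \<in> x"
  unfolding ultrafilter_N_def by (elim conjE) blast

lemma mdvd_tdvd:
  assumes x: "ultrafilter_N x" and z: "ultrafilter_N z" and w: "ultrafilter_N w"
  shows "tdvd x (bmult (bmult z x) w)"
  unfolding tdvd_def
proof
  fix A assume A: "A \<in> x"
  define U where "U = {n \<in> Npos. \<exists>a\<in>A. a dvd n}"
  define V where "V = {n \<in> Npos. sdiv U n \<in> w}"
  have AN: "A \<subseteq> Npos" using uf_sub[OF x A] .
  have "sdiv V k \<in> x" if k: "k \<in> Npos" for k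
  proof (rule uf_up[OF x A])
    show "A \<subseteq> sdiv V k"
    proof
      fix m assume m: "m \<in> A"
      have m1: "1 \<le> m" using AN m by (auto simp: Npos_def)
      have k1: "1 \<le> k" using k by (auto simp: Npos_def)
      have mk: "m * k \<in> Npos" using m1 k1 by (simp add: Npos_def)
      have "sdiv U (m*k) = Npos"
      proof
        show "sdiv U (m*k) \<subseteq> Npos" unfolding sdiv_def by blast
        show "Npos \<subseteq> sdiv U (m*k)"
        proof
          fix j assume j: "j \<in> Npos"
          have "j * (m*k) \<in> Npos" using j mk by (simp add: Npos_def)
          moreover have "m dvd j * (m*k)" by simp
          ultimately have "j * (m*k) \<in> U" unfolding U_def using m by blast
          then show "j \<in> sdiv U (m*k)" unfolding sdiv_def using j by blast
        qed
      qed
      then have "sdiv U (m*k) \<in> w" using uf_N[OF w] by simp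
      then have "m * k \<in> V" unfolding V_def using mk by blast
      then show "m \<in> sdiv V k" using m AN unfolding sdiv_def by blast
    qed
    show "sdiv V k \<subseteq> Npos" unfolding sdiv_def by blast
  qed
  then have "{k \<in> Npos. sdiv V k \<in> x} = Npos" by blast
  then have "V \<in> bmult z x" unfolding bmult_def using uf_N[OF z] V_def by simp
  then show "U \<in> bmult (bmult z x) w" unfolding bmult_def V_def U_def by blast
qed

lemma ldvd_tdvd:
  assumes x: "ultrafilter_N x" and z: "ultrafilter_N z"
  shows "tdvd x (bmult z x)"
  unfolding tdvd_def
proof
  fix A assume A: "A \<in> x"
  define U where "U = {n \<in> Npos. \<exists>a\<in>A. a dvd n}"
  have AN: "A \<subseteq> Npos" using uf_sub[OF x A] .
  have "sdiv U k \<in> x" if k: "k \<in> Npos" for k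
  proof (rule uf_up[OF x A])
    show "A \<subseteq> sdiv U k"
    proof
      fix m assume m: "m \<in> A"
      have m1: "1 \<le> m" using AN m by (auto simp: Npos_def)
      have k1: "1 \<le> k" using k by (auto simp: Npos_def)
      have mk: "m * k \<in> Npos" using m1 k1 by (simp add: Npos_def)
      have "m dvd m * k" by simp
      then have "m * k \<in> U" unfolding U_def using m mk by blast
      then show "m \<in> sdiv U k" using m AN unfolding sdiv_def by blast
    qed
    show "sdiv U k \<subseteq> Npos" unfolding sdiv_def by blast
  qed
  then have "{k \<in> Npos. sdiv U k \<in> x} = Npos" by blast
  then show "U \<in> bmult z x" unfolding bmult_def using uf_N[OF z] U_def by simp
qed

lemma rdvd_tdvd:
  assumes x: "ultrafilter_N x" and z: "ultrafilter_N z"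
  shows "tdvd x (bmult x z)"
  unfolding tdvd_def
proof
  fix A assume A: "A \<in> x"
  define U where "U = {n \<in> Npos. \<exists>a\<in>A. a dvd n}"
  have AN: "A \<subseteq> Npos" using uf_sub[OF x A] .
  have "A \<subseteq> {n \<in> Npos. sdiv U n \<in> z}"
  proof
    fix m assume m: "m \<in> A"
    have mN: "m \<in> Npos" using m AN by blast
    have "sdiv U m = Npos"
    proof
      show "sdiv U m \<subseteq> Npos" unfolding sdiv_def by blast
      show "Npos \<subseteq> sdiv U m"
      proof
        fix j assume j: "j \<in> Npos"
        have "j * m \<in> Npos" using j mN by (simp add: Npos_def)
        moreover have "m dvd j * m" by simp
        ultimately have "j * m \<in> U" unfolding U_def using m by blast
        then show "j \<in> sdiv U m" unfolding sdiv_def using j by blast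
      qed
    qed
    then show "m \<in> {n \<in> Npos. sdiv U n \<in> z}" using uf_N[OF z] mN by simp
  qed
  then have "{n \<in> Npos. sdiv U n \<in> z} \<in> x" by (rule uf_up[OF x A]) blast
  then show "U \<in> bmult x z" unfolding bmult_def U_def by blast
qed

lemma prime_from_tdvd:
  assumes "prime_wrt tdvd p" and "\<And>x. ultrafilter_N x \<Longrightarrow> R x p \<Longrightarrow> tdvd x p"
  shows "prime_wrt R p"
  using assms unfolding prime_wrt_def by blast

theorem lemma1p4:
  assumes "ultrafilter_N p"
    and "prime_wrt tdvd p"
  shows "prime_wrt ldvd p \<and> prime_wrt rdvd p \<and> prime_wrt mdvd p"
proof (intro conjI)
  show "prime_wrt ldvd p"
    by (rule prime_from_tdvd[OF assms(2)]) (auto simp: ldvd_def intro: ldvd_tdvd)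
  show "prime_wrt rdvd p"
    by (rule prime_from_tdvd[OF assms(2)]) (auto simp: rdvd_def intro: rdvd_tdvd)
  show "prime_wrt mdvd p"
    by (rule prime_from_tdvd[OF assms(2)]) (auto simp: mdvd_def intro: mdvd_tdvd)
qed

end
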